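(* Let $g$ be a graphon which maximizes $\mathcal S$ among all graphons with the same degree function (i.e. $\mathcal S(g)\ge\mathcal S(h)$ for every graphon $h$ with $d_h=d_g$ a.e.), and suppose the degree function $d_g$ takes only $M$ distinct values. Then $g$ is $M$-podal; more precisely, if $V_1,\dots,V_M$ are the level sets of $d_g$, then $g$ is almost everywhere constant on each $V_i\times V_j$.
   Context: A graphon is a symmetric measurable function $g:[0,1]^2\to[0,1]$. Its degree function is $d_g(x)=\int_0^1 g(x,y)\,dy$. The Shannon entropy is $\mathcal S(g)=\frac12\int_{[0,1]^2}S(g(x,y))\,dx\,dy$ with $S(w)=-w\ln w-(1-w)\ln(1-w)$. A graphon $g$ is $M$-podal if there is a partition of $[0,1]$ into at most $M$ measurable sets $V_1,\dots,V_m$ such that $g$ is almost everywhere constant on each $V_i\times V_j$. *)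

theory Defs
  imports "HOL-Analysis.Analysis"
begin

text \<open>Measurability is Borel measurability of the uncurried function on the plane
  (only values on the unit square matter).\<close>
definition graphon :: "(real \<Rightarrow> real \<Rightarrow> real) \<Rightarrow> bool" where
  "graphon g \<longleftrightarrow>
     (\<lambda>(x, y). g x y) \<in> borel_measurable (lborel \<Otimes>\<^sub>M lborel) \<and>
     (\<forall>x\<in>{0..1}. \<forall>y\<in>{0..1}. 0 \<le> g x y \<and> g x y \<le> 1 \<and> g x y = g y x)"

definition degree_fun :: "(real \<Rightarrow> real \<Rightarrow> real) \<Rightarrow> real \<Rightarrow> real" where
  "degree_fun g x = (LINT y:{0..1}|lborel. g x y)"

text \<open>S(w) = -w ln w - (1-w) ln(1-w)  (with 0 ln 0 = 0, automatic since 0 * _ = 0).\<close>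
definition S_ent :: "real \<Rightarrow> real" where
  "S_ent w = - w * ln w - (1 - w) * ln (1 - w)"

definition entropy :: "(real \<Rightarrow> real \<Rightarrow> real) \<Rightarrow> real" where
  "entropy g = (1/2) * (LINT p:({0..1} \<times> {0..1})|(lborel \<Otimes>\<^sub>M lborel). S_ent (g (fst p) (snd p)))"

definition podal :: "nat \<Rightarrow> (real \<Rightarrow> real \<Rightarrow> real) \<Rightarrow> bool" where
  "podal M g \<longleftrightarrow> (\<exists>m V. m \<le> M \<and> (\<forall>i<m. V i \<in> sets lebesgue) \<and>
      (\<Union>i<m. V i) = {0..1} \<and> (\<forall>i<m. \<forall>j<m. i \<noteq> j \<longrightarrow> V i \<inter> V j = {}) \<and>
      (\<forall>i<m. \<forall>j<m. \<exists>c. AE p in lborel \<Otimes>\<^sub>M lborel.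
          fst p \<in> V i \<and> snd p \<in> V j \<longrightarrow> g (fst p) (snd p) = c))"

end

theory Submission
  imports Defs
begin

lemma ln_less_minus_one: assumes "0 < (x::real)" "x \<noteq> 1" shows "ln x < x - 1"
proof -
  define s where "s = sqrt x"
  have s: "0 < s" "s \<noteq> 1" "x = s^2" using assms by (auto simp: s_def)
  have "ln x = 2 * ln s" using s by (simp add: ln_realpow)
  also have "\<dots> \<le> 2 * (s - 1)" using ln_le_minus_one[OF s(1)] by simp
  also have "\<dots> < s^2 - 1"
  proof -
    have "0 < (s - 1)^2" using s by simp
    thus ?thesis by (simp add: power2_eq_square algebra_simps)
  qed
  finally show ?thesis using s by simp
qed

lemma xlog_ineq:
  assumes "0 < (c::real)" "0 \<le> w"
  shows "w * ln w - w * ln c \<ge> w - c" and "w \<noteq> c \<Longrightarrow> w * ln w - w * ln c > w - c"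
proof -
  have main: "w * ln w - w * ln c \<ge> w - c \<and> (w \<noteq> c \<longrightarrow> w * ln w - w * ln c > w - c)"
  proof (cases "w = 0")
    case True thus ?thesis using assms by simp
  next
    case False
    hence w: "0 < w" using assms by simp
    have eq: "w * ln w - w * ln c = - w * ln (c / w)" using w assms by (simp add: ln_div algebra_simps)
    have "ln (c/w) \<le> c/w - 1" using ln_le_minus_one w assms by simp
    hence "- w * ln (c/w) \<ge> - w * (c/w - 1)" using w by (simp add: mult_left_mono)
    moreover have "- w * (c/w - 1) = w - c" using w by (simp add: field_simps)
    moreover have "w \<noteq> c \<longrightarrow> - w * ln (c/w) > w - c"
    proof
      assume "w \<noteq> c"
      hence "c / w \<noteq> 1" using w by simp
      hence "ln (c/w) < c/w - 1" using ln_less_minus_one w assms by simp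
      hence "- w * ln (c/w) > - w * (c/w - 1)" using w by simp
      moreover have "- w * (c/w - 1) = w - c" using w by (simp add: field_simps)
      ultimately show "- w * ln (c/w) > w - c" by linarith
    qed
    ultimately show ?thesis using eq by simp
  qed
  thus "w * ln w - w * ln c \<ge> w - c" by simp
  show "w \<noteq> c \<Longrightarrow> w * ln w - w * ln c > w - c" using main by simp
qed

lemma S_tangent:
  assumes "0 < c" "c < 1" "0 \<le> w" "w \<le> 1"
  shows "S_ent w \<le> S_ent c + (ln (1-c) - ln c) * (w - c)"
    and "w \<noteq> c \<Longrightarrow> S_ent w < S_ent c + (ln (1-c) - ln c) * (w - c)"
proof -
  have eq: "S_ent c + (ln (1-c) - ln c) * (w - c) - S_ent w
      = (w * ln w - w * ln c) + ((1-w) * ln (1-w) - (1-w) * ln (1-c))"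
    unfolding S_ent_def by (simp add: algebra_simps)
  have A: "w * ln w - w * ln c \<ge> w - c" using xlog_ineq assms by simp
  have B: "(1-w) * ln (1-w) - (1-w) * ln (1-c) \<ge> (1-w) - (1-c)" using xlog_ineq[of "1-c" "1-w"] assms by simp
  show "S_ent w \<le> S_ent c + (ln (1-c) - ln c) * (w - c)" using eq A B by linarith
  assume "w \<noteq> c"
  hence A': "w * ln w - w * ln c > w - c" using xlog_ineq assms by simp
  show "S_ent w < S_ent c + (ln (1-c) - ln c) * (w - c)" using eq A' B by linarith
qed

lemma S_bounds: assumes "0 \<le> w" "w \<le> (1::real)" shows "0 \<le> S_ent w" "S_ent w \<le> 1"
proof -
  have a: "w * ln w \<le> 0" using assms by (cases "w = 0") (auto intro: mult_nonneg_nonpos)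
  have b: "(1-w) * ln (1-w) \<le> 0" using assms by (cases "w = 1") (auto intro: mult_nonneg_nonpos)
  show "0 \<le> S_ent w" unfolding S_ent_def using a b by simp
  have c: "- (w * ln w) \<le> 1 - w"
  proof (cases "w = 0")
    case False
    hence "0 < w" using assms by simp
    hence "ln (1/w) \<le> 1/w - 1" by (intro ln_le_minus_one) simp
    hence "w * ln (1/w) \<le> w * (1/w - 1)" using \<open>0<w\<close> by (simp add: mult_left_mono)
    moreover have "w * (1/w - 1) = 1 - w" using \<open>0<w\<close> by (simp add: field_simps)
    moreover have "w * ln (1/w) = - (w * ln w)" using \<open>0<w\<close> by (simp add: ln_div)
    ultimately show ?thesis by linarith
  qed (use assms in simp)
  have d: "- ((1-w) * ln (1-w)) \<le> w"
  proof (cases "w = 1")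
    case False
    hence "0 < 1-w" using assms by simp
    hence "ln (1/(1-w)) \<le> 1/(1-w) - 1" by (intro ln_le_minus_one) simp
    hence "(1-w) * ln (1/(1-w)) \<le> (1-w) * (1/(1-w) - 1)" using \<open>0<1-w\<close> by (simp add: mult_left_mono)
    moreover have "(1-w) * (1/(1-w) - 1) = w" using \<open>0<1-w\<close> by (simp add: field_simps)
    moreover have "(1-w) * ln (1/(1-w)) = - ((1-w) * ln (1-w))" using \<open>0<1-w\<close> by (simp add: ln_div)
    ultimately show ?thesis by linarith
  qed (use assms in simp)
  show "S_ent w \<le> 1" unfolding S_ent_def using c d by simp
qed

lemma S_meas[measurable]: "S_ent \<in> borel_measurable borel"
  unfolding S_ent_def by measurable

lemma block:
  fixes M :: "'a measure" and f :: "'a \<Rightarrow> real"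
  assumes B[measurable]: "B \<in> sets M" and fin: "emeasure M B < \<infinity>"
    and f[measurable]: "f \<in> borel_measurable M"
    and rng: "\<And>x. x \<in> B \<Longrightarrow> 0 \<le> f x \<and> f x \<le> 1"
    and c: "c = (\<integral>x. indicator B x * f x \<partial>M) / measure M B"
  shows "(\<integral>x. indicator B x * S_ent (f x) \<partial>M) \<le> measure M B * S_ent c"
    and "(\<integral>x. indicator B x * S_ent (f x) \<partial>M) = measure M B * S_ent c \<Longrightarrow>
          AE x in M. x \<in> B \<longrightarrow> f x = c"
proof -
  define m where "m = measure M B"
  define IF where "IF = (\<integral>x. indicator B x * f x \<partial>M)"
  define IS where "IS = (\<integral>x. indicator B x * S_ent (f x) \<partial>M)"
  have intf: "integrable M (\<lambda>x. indicator B x * f x)"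
    by (rule integrableI_bounded_set[where A=B and B=1]) (use fin rng in \<open>auto simp: indicator_def\<close>)
  have intS: "integrable M (\<lambda>x. indicator B x * S_ent (f x))"
    by (rule integrableI_bounded_set[where A=B and B=1]) (use fin rng S_bounds in \<open>auto simp: indicator_def\<close>)
  have intI: "integrable M (indicator B :: 'a \<Rightarrow> real)"
    using fin by (simp add: integrable_indicator_iff)
  have intI': "integrable M (\<lambda>x. indicator B x * (1 - f x))"
    by (rule integrableI_bounded_set[where A=B and B=1]) (use fin rng in \<open>auto simp: indicator_def\<close>)
  have mI: "(\<integral>x. indicator B x \<partial>M) = m" unfolding m_def using B by (simp add: Int_absorb2 sets.sets_into_space)
  have IF0: "0 \<le> IF" unfolding IF_def using rng by (intro Bochner_Integration.integral_nonneg) (auto simp: indicator_def)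
  have IFm: "IF \<le> m" unfolding IF_def mI[symmetric] using rng intf intI
    by (intro integral_mono) (auto simp: indicator_def)
  have IS0: "0 \<le> IS" unfolding IS_def using rng S_bounds by (intro Bochner_Integration.integral_nonneg) (auto simp: indicator_def)
  have res: "IS \<le> m * S_ent c \<and> (IS = m * S_ent c \<longrightarrow> (AE x in M. x \<in> B \<longrightarrow> f x = c))"
  proof (cases "m = 0")
    case True
    have "emeasure M B = 0" using True fin unfolding m_def by (simp add: emeasure_eq_ennreal_measure)
    hence N: "B \<in> null_sets M" using B by auto
    hence AEn: "AE x in M. x \<notin> B" by (rule AE_not_in)
    have "IS = 0" unfolding IS_def by (rule integral_eq_zero_AE) (use AEn in \<open>auto\<close>)
    thus ?thesis using True AEn by auto
  next
    case False
    hence mpos: "0 < m" unfolding m_def by (simp add: measure_nonneg order_less_le)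
    have cdef: "c = IF / m" using c unfolding IF_def m_def by simp
    hence cm: "IF = c * m" using mpos by simp
    have c01: "0 \<le> c" "c \<le> 1" using cdef IF0 IFm mpos by auto
    consider "c = 0" | "c = 1" | "0 < c \<and> c < 1" using c01 by linarith
    thus ?thesis
    proof cases
      case 1
      hence "IF = 0" using cm by simp
      hence "AE x in M. indicator B x * f x = 0"
        using integral_nonneg_eq_0_iff_AE[OF intf] rng unfolding IF_def by (auto simp: indicator_def)
      hence AE0: "AE x in M. x \<in> B \<longrightarrow> f x = c" using 1 by (auto simp: indicator_def)
      have "IS = 0" unfolding IS_def
        by (rule integral_eq_zero_AE) (use AE0 1 in \<open>auto simp: indicator_def S_ent_def\<close>)
      thus ?thesis using AE0 1 by (simp add: S_ent_def)
    next
      case 2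
      have "(\<integral>x. indicator B x * (1 - f x) \<partial>M) = m - IF"
        unfolding IF_def mI[symmetric] using intf intI by (simp add: algebra_simps)
      hence "(\<integral>x. indicator B x * (1 - f x) \<partial>M) = 0" using cm 2 by simp
      hence "AE x in M. indicator B x * (1 - f x) = 0"
        using integral_nonneg_eq_0_iff_AE[OF intI'] rng by (auto simp: indicator_def)
      hence AE0: "AE x in M. x \<in> B \<longrightarrow> f x = c" using 2 by (auto simp: indicator_def)
      have "IS = 0" unfolding IS_def
        by (rule integral_eq_zero_AE) (use AE0 2 in \<open>auto simp: indicator_def S_ent_def\<close>)
      thus ?thesis using AE0 2 by (simp add: S_ent_def)
    next
      case 3
      define L where "L = ln (1 - c) - ln c"
      define D where "D x = indicator B x * (S_ent c + L * (f x - c) - S_ent (f x))" for x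
      have Deq: "D = (\<lambda>x. S_ent c * indicator B x + L * (indicator B x * f x) - (L * c) * indicator B x
                   - indicator B x * S_ent (f x))"
        by (rule ext) (simp add: D_def algebra_simps)
      have intD: "integrable M D" unfolding Deq using intf intS intI by simp
      have ID: "integral\<^sup>L M D = m * S_ent c - IS"
      proof -
        have "integral\<^sup>L M D = S_ent c * m + L * IF - (L * c) * m - IS"
          unfolding Deq using intf intS intI by (simp add: IF_def IS_def m_def)
        thus ?thesis using cm by (simp add: algebra_simps)
      qed
      have Dnn: "\<And>x. 0 \<le> D x"
        using S_tangent(1)[of c] 3 rng unfolding D_def L_def by (auto simp: indicator_def)
      have "0 \<le> integral\<^sup>L M D" using Dnn by (simp add: Bochner_Integration.integral_nonneg)
      hence le: "IS \<le> m * S_ent c" using ID by simp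
      have "IS = m * S_ent c \<longrightarrow> (AE x in M. x \<in> B \<longrightarrow> f x = c)"
      proof
        assume "IS = m * S_ent c"
        hence "integral\<^sup>L M D = 0" using ID by simp
        hence "AE x in M. D x = 0" using integral_nonneg_eq_0_iff_AE[OF intD] Dnn by simp
        thus "AE x in M. x \<in> B \<longrightarrow> f x = c"
        proof (rule AE_mp, intro AE_I2 impI)
          fix x assume "D x = 0" "x \<in> B"
          show "f x = c"
          proof (rule ccontr)
            assume "f x \<noteq> c"
            hence "S_ent (f x) < S_ent c + L * (f x - c)"
              using S_tangent(2)[of c "f x"] 3 rng[OF \<open>x\<in>B\<close>] unfolding L_def by auto
            thus False using \<open>D x = 0\<close> \<open>x\<in>B\<close> unfolding D_def by simp
          qed
        qed
      qed
      thus ?thesis using le by simp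
    qed
  qed
  show "(\<integral>x. indicator B x * S_ent (f x) \<partial>M) \<le> measure M B * S_ent c"
    using res unfolding IS_def m_def by simp
  show "(\<integral>x. indicator B x * S_ent (f x) \<partial>M) = measure M B * S_ent c \<Longrightarrow>
          AE x in M. x \<in> B \<longrightarrow> f x = c"
    using res unfolding IS_def m_def by simp
qed

lemma unit_sq_fin: "emeasure (lborel \<Otimes>\<^sub>M lborel) ({0..1::real} \<times> {0..1::real}) < \<infinity>"
  by (simp add: lborel.emeasure_pair_measure_Times)

lemma fub:
  fixes g :: "real \<Rightarrow> real \<Rightarrow> real"
  assumes gm[measurable]: "(\<lambda>p. g (fst p) (snd p)) \<in> borel_measurable (lborel \<Otimes>\<^sub>M lborel)"
    and gb: "\<And>x y. x \<in> {0..1} \<Longrightarrow> y \<in> {0..1} \<Longrightarrow> 0 \<le> g x y \<and> g x y \<le> 1"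
    and X[measurable]: "X \<in> sets lborel" and Y[measurable]: "Y \<in> sets lborel"
    and XY: "X \<subseteq> {0..1}" "Y \<subseteq> {0..1}"
  shows "integrable (lborel \<Otimes>\<^sub>M lborel) (\<lambda>p. indicator (X \<times> Y) p * g (fst p) (snd p))"
    and "(\<integral>p. indicator (X \<times> Y) p * g (fst p) (snd p) \<partial>(lborel \<Otimes>\<^sub>M lborel))
         = (\<integral>x. indicator X x * (\<integral>y. indicator Y y * g x y \<partial>lborel) \<partial>lborel)"
    and "(\<integral>p. indicator (X \<times> Y) p * g (fst p) (snd p) \<partial>(lborel \<Otimes>\<^sub>M lborel))
         = (\<integral>y. indicator Y y * (\<integral>x. indicator X x * g x y \<partial>lborel) \<partial>lborel)"
proof -
  have fin: "emeasure (lborel \<Otimes>\<^sub>M lborel) (X \<times> Y) < \<infinity>"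
  proof -
    have "emeasure (lborel \<Otimes>\<^sub>M lborel) (X \<times> Y) \<le> emeasure (lborel \<Otimes>\<^sub>M lborel) ({0..1::real} \<times> {0..1::real})"
      using XY by (intro emeasure_mono) auto
    thus ?thesis using unit_sq_fin by (simp add: order_le_less_trans)
  qed
  show int: "integrable (lborel \<Otimes>\<^sub>M lborel) (\<lambda>p. indicator (X \<times> Y) p * g (fst p) (snd p))"
    by (rule integrableI_bounded_set[where A="X \<times> Y" and B=1])
       (use fin gb XY pair_measureI[OF X Y] in \<open>auto simp: indicator_def subset_iff\<close>)
  have eq: "(\<lambda>p. indicator (X \<times> Y) p * g (fst p) (snd p)) = (\<lambda>(x,y). indicator X x * (indicator Y y * g x y))"
    by (auto simp: indicator_times)
  have int2: "integrable (lborel \<Otimes>\<^sub>M lborel) (\<lambda>(x,y). indicator X x * (indicator Y y * g x y))"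
    using int eq by simp
  show "(\<integral>p. indicator (X \<times> Y) p * g (fst p) (snd p) \<partial>(lborel \<Otimes>\<^sub>M lborel))
         = (\<integral>x. indicator X x * (\<integral>y. indicator Y y * g x y \<partial>lborel) \<partial>lborel)"
    using lborel_pair.integral_fst'[OF int2] by (simp add: eq)
  have int3: "integrable (lborel \<Otimes>\<^sub>M lborel) (\<lambda>(x,y). indicator Y y * (indicator X x * g x y))"
    using int2 by (simp add: algebra_simps)
  have eq3: "(\<lambda>p. indicator (X \<times> Y) p * g (fst p) (snd p)) = (\<lambda>(x,y). indicator Y y * (indicator X x * g x y))"
    by (auto simp: indicator_times)
  show "(\<integral>p. indicator (X \<times> Y) p * g (fst p) (snd p) \<partial>(lborel \<Otimes>\<^sub>M lborel))
         = (\<integral>y. indicator Y y * (\<integral>x. indicator X x * g x y \<partial>lborel) \<partial>lborel)"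
    using lborel_pair.integral_snd[OF int3] by (simp add: eq3)
qed

theorem proposition3p2:
  fixes g :: "real \<Rightarrow> real \<Rightarrow> real" and M :: nat
  assumes "graphon g"
    and "\<And>h. graphon h \<Longrightarrow>
           (AE x in lborel. x \<in> {0..1} \<longrightarrow> degree_fun h x = degree_fun g x) \<Longrightarrow>
           entropy h \<le> entropy g"
    and "finite (degree_fun g ` {0..1})"
    and "card (degree_fun g ` {0..1}) = M"
  shows "podal M g \<and>
    (\<forall>a\<in>degree_fun g ` {0..1}. \<forall>b\<in>degree_fun g ` {0..1}. \<exists>c.
       AE p in lborel \<Otimes>\<^sub>M lborel.
         fst p \<in> {x\<in>{0..1}. degree_fun g x = a} \<and> snd p \<in> {x\<in>{0..1}. degree_fun g x = b}
         \<longrightarrow> g (fst p) (snd p) = c)"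
proof -
  note gr = assms(1)[unfolded graphon_def]
  have gm[measurable]: "(\<lambda>p. g (fst p) (snd p)) \<in> borel_measurable (lborel \<Otimes>\<^sub>M lborel)"
    using gr by (simp add: split_beta')
  have gb: "\<And>x y. x \<in> {0..1} \<Longrightarrow> y \<in> {0..1} \<Longrightarrow> 0 \<le> g x y \<and> g x y \<le> 1" using gr by blast
  have gs: "\<And>x y. x \<in> {0..1} \<Longrightarrow> y \<in> {0..1} \<Longrightarrow> g x y = g y x" using gr by blast
  define P where "P = (lborel :: real measure) \<Otimes>\<^sub>M (lborel :: real measure)"
  define d where "d = degree_fun g"
  define A where "A = d ` {0..1}"
  define V where "V a = {x\<in>{0..1::real}. d x = a}" for a
  have finA: "finite A" using assms(3) unfolding A_def d_def .
  have dint: "d x = (\<integral>y. indicator {0..1} y * g x y \<partial>lborel)" for x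
    unfolding d_def degree_fun_def set_lebesgue_integral_def by simp
  have dm[measurable]: "d \<in> borel_measurable lborel"
  proof -
    have "(\<lambda>x. \<integral>y. indicator {0..1} y * g x y \<partial>lborel) \<in> borel_measurable lborel"
      by (rule lborel.borel_measurable_lebesgue_integral) (simp add: split_beta')
    moreover have "d = (\<lambda>x. \<integral>y. indicator {0..1} y * g x y \<partial>lborel)" using dint by (rule ext)
    ultimately show ?thesis by simp
  qed
  have Vm[measurable]: "V a \<in> sets lborel" for a
    unfolding V_def by measurable
  have Vsub: "V a \<subseteq> {0..1}" for a unfolding V_def by auto
  have indV: "x \<in> {0..1} \<Longrightarrow> indicator (V a) x = (if d x = a then 1 else (0::real))" for x a
    unfolding V_def by (simp add: indicator_def)
  have sumV: "(\<Sum>a\<in>A. indicator (V a) x) = (indicator {0..1} x :: real)" for x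
  proof (cases "x \<in> {0..1}")
    case True
    hence "(\<Sum>a\<in>A. indicator (V a) x) = (\<Sum>a\<in>A. if d x = a then 1 else (0::real))"
      using indV by simp
    also have "\<dots> = 1" using finA True unfolding A_def by (simp add: sum.delta')
    finally show ?thesis using True by simp
  next
    case False
    thus ?thesis using Vsub by (auto simp: indicator_def subset_iff intro!: sum.neutral)
  qed
  define G where "G p = g (fst p) (snd p)" for p :: "real \<times> real"
  have Gm[measurable]: "G \<in> borel_measurable P" unfolding G_def P_def by simp
  define mu where "mu a = measure lborel (V a)" for a
  define I where "I a b = (\<integral>p. indicator (V a \<times> V b) p * G p \<partial>P)" for a b
  define c where "c a b = I a b / measure P (V a \<times> V b)" for a b
  have Vfin: "emeasure lborel (V a) < \<infinity>" for a
  proof -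
    have "emeasure lborel (V a) \<le> emeasure lborel {0..1::real}" using Vsub by (intro emeasure_mono) auto
    thus ?thesis by (simp add: order_le_less_trans)
  qed
  have mu0: "0 \<le> mu a" for a unfolding mu_def by simp
  have emV: "emeasure lborel (V a) = ennreal (mu a)" for a
    unfolding mu_def by (rule emeasure_eq_ennreal_measure) (use Vfin[of a] in simp)
  have emP: "emeasure P (V a \<times> V b) = ennreal (mu a * mu b)" for a b
  proof -
    have "emeasure P (V a \<times> V b) = emeasure lborel (V a) * emeasure lborel (V b)"
      unfolding P_def by (rule lborel.emeasure_pair_measure_Times) (use Vm in auto)
    also have "\<dots> = ennreal (mu a * mu b)"
      using emV[of a] emV[of b] mu0 by (simp add: ennreal_mult)
    finally show ?thesis .
  qed
  have mP: "measure P (V a \<times> V b) = mu a * mu b" for a b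
    using emP[of a b] mu0[of a] mu0[of b] unfolding measure_def by simp
  have fubA: "I a b = (\<integral>x. indicator (V a) x * (\<integral>y. indicator (V b) y * g x y \<partial>lborel) \<partial>lborel)" for a b
    unfolding I_def G_def P_def by (rule fub(2)[OF gm gb]) (use Vsub Vm in auto)
  have fubB: "I a b = (\<integral>y. indicator (V b) y * (\<integral>x. indicator (V a) x * g x y \<partial>lborel) \<partial>lborel)" for a b
    unfolding I_def G_def P_def by (rule fub(3)[OF gm gb]) (use Vsub Vm in auto)
  have intI: "integrable P (\<lambda>p. indicator (V a \<times> V b) p * G p)" for a b
    unfolding G_def P_def by (rule fub(1)[OF gm gb]) (use Vsub Vm in auto)
  have Isym: "I a b = I b a" for a b
  proof -
    have "I b a = (\<integral>x. indicator (V b) x * (\<integral>y. indicator (V a) y * g x y \<partial>lborel) \<partial>lborel)"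
      by (rule fubA)
    also have "\<dots> = (\<integral>x. indicator (V b) x * (\<integral>y. indicator (V a) y * g y x \<partial>lborel) \<partial>lborel)"
    proof (rule Bochner_Integration.integral_cong[OF refl])
      fix x
      show "indicator (V b) x * (\<integral>y. indicator (V a) y * g x y \<partial>lborel)
          = indicator (V b) x * (\<integral>y. indicator (V a) y * g y x \<partial>lborel)"
      proof (cases "x \<in> V b")
        case True
        hence x: "x \<in> {0..1}" using Vsub[of b] by auto
        have "(\<integral>y. indicator (V a) y * g x y \<partial>lborel) = (\<integral>y. indicator (V a) y * g y x \<partial>lborel)"
          by (rule Bochner_Integration.integral_cong[OF refl])
             (use gs[OF x] Vsub[of a] in \<open>auto simp: indicator_def\<close>)
        thus ?thesis by simp
      qed simp
    qed
    also have "\<dots> = I a b" using fubB[of a b] by simp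
    finally show ?thesis by simp
  qed
  have I0: "0 \<le> I a b" for a b
    unfolding I_def G_def using gb Vsub
    by (intro Bochner_Integration.integral_nonneg) (auto simp: indicator_def subset_iff)
  have Ile: "I a b \<le> mu a * mu b" for a b
  proof -
    have Bm: "V a \<times> V b \<in> sets P" unfolding P_def using Vm by (intro pair_measureI) auto
    note emP[of a b]
    hence intInd: "integrable P (indicator (V a \<times> V b) :: _ \<Rightarrow> real)"
      using Bm by (intro integrable_real_indicator) auto
    have "I a b \<le> (\<integral>p. indicator (V a \<times> V b) p \<partial>P)"
      unfolding I_def
    proof (rule Bochner_Integration.integral_mono[OF intI intInd])
      fix p :: "real \<times> real"
      show "indicator (V a \<times> V b) p * G p \<le> indicator (V a \<times> V b) p"
      proof (cases "p \<in> V a \<times> V b")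
        case True
        hence "fst p \<in> {0..1}" "snd p \<in> {0..1}" using Vsub[of a] Vsub[of b] by (auto simp: mem_Times_iff)
        thus ?thesis using True gb unfolding G_def by simp
      qed simp
    qed
    also have "\<dots> = mu a * mu b" using mP[of a b] by (simp add: P_def space_pair_measure)
    finally show ?thesis .
  qed
  have sumI: "(\<Sum>b\<in>A. I a b) = a * mu a" for a
  proof -
    have "(\<Sum>b\<in>A. I a b) = (\<integral>p. (\<Sum>b\<in>A. indicator (V a \<times> V b) p * G p) \<partial>P)"
      unfolding I_def using intI by (simp add: Bochner_Integration.integral_sum)
    also have "\<dots> = (\<integral>p. indicator (V a \<times> {0..1}) p * G p \<partial>P)"
    proof (rule Bochner_Integration.integral_cong[OF refl])
      fix p :: "real \<times> real"
      have "(\<Sum>b\<in>A. indicator (V a \<times> V b) p * G p)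
          = indicator (V a) (fst p) * (\<Sum>b\<in>A. indicator (V b) (snd p)) * G p"
        by (simp add: indicator_times sum_distrib_left sum_distrib_right algebra_simps)
      also have "\<dots> = indicator (V a \<times> {0..1}) p * G p" by (simp add: sumV indicator_times)
      finally show "(\<Sum>b\<in>A. indicator (V a \<times> V b) p * G p) = indicator (V a \<times> {0..1}) p * G p" .
    qed
    also have "\<dots> = (\<integral>x. indicator (V a) x * (\<integral>y. indicator {0..1} y * g x y \<partial>lborel) \<partial>lborel)"
      unfolding G_def P_def by (rule fub(2)[OF gm gb]) (use Vsub Vm in auto)
    also have "\<dots> = (\<integral>x. indicator (V a) x * a \<partial>lborel)"
    proof (rule Bochner_Integration.integral_cong[OF refl])
      fix x
      show "indicator (V a) x * (\<integral>y. indicator {0..1} y * g x y \<partial>lborel) = indicator (V a) x * a"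
        using dint[of x] by (cases "x \<in> V a") (auto simp: V_def)
    qed
    also have "\<dots> = a * mu a" unfolding mu_def using Vm[of a] by simp
    finally show ?thesis .
  qed
  have sumF: "x \<in> {0..1} \<Longrightarrow> (\<Sum>a\<in>A. indicator (V a) x * F a) = (F (d x) :: real)" for x F
  proof -
    assume x: "x \<in> {0..1}"
    have "(\<Sum>a\<in>A. indicator (V a) x * F a) = (\<Sum>a\<in>A. if d x = a then F a else 0)"
      using indV[OF x] by (intro sum.cong) auto
    also have "\<dots> = F (d x)" using finA x unfolding A_def by (simp add: sum.delta')
    finally show ?thesis .
  qed
  have c01: "0 \<le> c a b \<and> c a b \<le> 1" for a b
  proof (cases "mu a * mu b = 0")
    case True thus ?thesis unfolding c_def mP by (simp only:) simp
  next
    case False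
    hence "0 < mu a * mu b" using mu0[of a] mu0[of b] by simp
    thus ?thesis unfolding c_def mP using I0[of a b] Ile[of a b] by simp
  qed
  have csym: "c a b = c b a" for a b unfolding c_def mP using Isym[of a b] by (simp add: mult.commute)
  have cmu: "0 < mu a \<Longrightarrow> c a b * mu b = I a b / mu a" for a b
  proof -
    assume a: "0 < mu a"
    show ?thesis
    proof (cases "mu b = 0")
      case True
      hence "I a b = 0" using I0[of a b] Ile[of a b] by simp
      thus ?thesis using True by simp
    next
      case False
      thus ?thesis unfolding c_def mP using a by (simp add: field_simps)
    qed
  qed
  define h where "h x y = (\<Sum>a\<in>A. \<Sum>b\<in>A. indicator (V a) x * indicator (V b) y * c a b)" for x y
  have hrow: "x \<in> {0..1} \<Longrightarrow> h x y = (\<Sum>b\<in>A. indicator (V b) y * c (d x) b)" for x y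
  proof -
    assume x: "x \<in> {0..1}"
    have "h x y = (\<Sum>a\<in>A. indicator (V a) x * (\<Sum>b\<in>A. indicator (V b) y * c a b))"
      unfolding h_def by (simp add: sum_distrib_left algebra_simps)
    also have "\<dots> = (\<Sum>b\<in>A. indicator (V b) y * c (d x) b)" by (rule sumF[OF x])
    finally show ?thesis .
  qed
  have hsq: "x \<in> {0..1} \<Longrightarrow> y \<in> {0..1} \<Longrightarrow> h x y = c (d x) (d y)" for x y
    using hrow[of x y] sumF[of y "\<lambda>b. c (d x) b"] by simp
  have hout: "\<not> (x \<in> {0..1} \<and> y \<in> {0..1}) \<Longrightarrow> h x y = 0" for x y
  proof -
    assume "\<not> (x \<in> {0..1} \<and> y \<in> {0..1})"
    hence z: "indicator (V a) x * indicator (V b) y = (0::real)" for a b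
      using Vsub[of a] Vsub[of b] by (auto simp: indicator_def)
    show ?thesis unfolding h_def by (intro sum.neutral ballI) (simp add: z)
  qed
  have hm: "(\<lambda>p. h (fst p) (snd p)) \<in> borel_measurable P"
    unfolding h_def P_def by measurable
  have graphon_h: "graphon h"
    unfolding graphon_def
  proof (intro conjI ballI)
    show "(\<lambda>(x, y). h x y) \<in> borel_measurable (lborel \<Otimes>\<^sub>M lborel)"
      using hm unfolding P_def by (simp add: split_beta')
  next
    fix x y :: real assume "x \<in> {0..1}" "y \<in> {0..1}"
    thus "0 \<le> h x y" "h x y \<le> 1" "h x y = h y x" using hsq c01 csym by auto
  qed
  have degh: "x \<in> V a \<Longrightarrow> 0 < mu a \<Longrightarrow> degree_fun h x = a" for x a
  proof -
    assume xa: "x \<in> V a" and ma: "0 < mu a"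
    hence x: "x \<in> {0..1}" and dx: "d x = a" unfolding V_def by auto
    have "degree_fun h x = (\<integral>y. indicator {0..1} y * h x y \<partial>lborel)"
      unfolding degree_fun_def set_lebesgue_integral_def by simp
    also have "\<dots> = (\<integral>y. (\<Sum>b\<in>A. indicator (V b) y * c a b) \<partial>lborel)"
    proof (rule Bochner_Integration.integral_cong[OF refl])
      fix y
      show "indicator {0..1} y * h x y = (\<Sum>b\<in>A. indicator (V b) y * c a b)"
      proof (cases "y \<in> {0..1}")
        case True thus ?thesis using hrow[OF x] dx by simp
      next
        case False
        hence "indicator (V b) y = (0::real)" for b using Vsub[of b] by (auto simp: indicator_def)
        thus ?thesis using False by simp
      qed
    qed
    also have "\<dots> = (\<Sum>b\<in>A. mu b * c a b)"
      using Vfin Vm unfolding mu_def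
      by (subst Bochner_Integration.integral_sum) (auto intro!: integrable_real_indicator)
    also have "\<dots> = (\<Sum>b\<in>A. I a b / mu a)" using cmu[OF ma] by (simp add: mult.commute)
    also have "\<dots> = (\<Sum>b\<in>A. I a b) / mu a" by (simp add: sum_divide_distrib)
    also have "\<dots> = a" using sumI[of a] ma by simp
    finally show ?thesis .
  qed
  have AEdeg: "AE x in lborel. x \<in> {0..1} \<longrightarrow> degree_fun h x = degree_fun g x"
  proof -
    have "AE x in lborel. \<forall>a\<in>A. x \<in> V a \<longrightarrow> degree_fun h x = a"
    proof (rule AE_finite_allI[OF finA])
      fix a
      show "AE x in lborel. x \<in> V a \<longrightarrow> degree_fun h x = a"
      proof (cases "mu a = 0")
        case True
        hence "V a \<in> null_sets lborel" using emV[of a] Vm[of a] by (simp add: null_sets_def)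
        from AE_not_in[OF this] show ?thesis by eventually_elim auto
      next
        case False
        hence "0 < mu a" using mu0[of a] by simp
        thus ?thesis using degh by auto
      qed
    qed
    thus ?thesis
    proof eventually_elim
      case (elim x)
      show ?case
      proof
        assume x: "x \<in> {0..1}"
        hence "d x \<in> A" "x \<in> V (d x)" unfolding A_def V_def by auto
        thus "degree_fun h x = degree_fun g x" using elim unfolding d_def by auto
      qed
    qed
  qed
  have sqsum: "indicator ({0..1} \<times> {0..1}) p = (\<Sum>a\<in>A. \<Sum>b\<in>A. indicator (V a \<times> V b) p :: real)" for p
    by (simp add: indicator_times sumV[symmetric] sum_product)
  have Bm: "V a \<times> V b \<in> sets P" for a b unfolding P_def using Vm by (intro pair_measureI) auto
  have blocks: "(\<integral>p. indicator ({0..1} \<times> {0..1}) p * F p \<partial>P)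
      = (\<Sum>a\<in>A. \<Sum>b\<in>A. \<integral>p. indicator (V a \<times> V b) p * F p \<partial>P)"
    if Fm: "F \<in> borel_measurable P" and Fb: "\<And>p. p \<in> {0..1} \<times> {0..1} \<Longrightarrow> \<bar>F p\<bar> \<le> 1" for F :: "real \<times> real \<Rightarrow> real"
  proof -
    have int: "integrable P (\<lambda>p. indicator (V a \<times> V b) p * F p)" for a b
    proof (rule integrableI_bounded_set[where A="V a \<times> V b" and B=1])
      show "V a \<times> V b \<in> sets P" by (rule Bm)
      show "(\<lambda>p. indicator (V a \<times> V b) p * F p) \<in> borel_measurable P" using Fm Bm[of a b] by measurable
      show "emeasure P (V a \<times> V b) < \<infinity>" using emP by simp
      show "AE x in P. x \<in> V a \<times> V b \<longrightarrow> norm (indicator (V a \<times> V b) x * F x) \<le> 1"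
      proof (intro AE_I2 impI)
        fix p assume p: "p \<in> V a \<times> V b"
        hence "p \<in> {0..1} \<times> {0..1}" using Vsub[of a] Vsub[of b] by blast
        thus "norm (indicator (V a \<times> V b) p * F p) \<le> 1" using Fb p by simp
      qed
      show "AE x in P. x \<notin> V a \<times> V b \<longrightarrow> indicator (V a \<times> V b) x * F x = 0" by simp
    qed
    have "(\<integral>p. indicator ({0..1} \<times> {0..1}) p * F p \<partial>P)
        = (\<integral>p. (\<Sum>a\<in>A. \<Sum>b\<in>A. indicator (V a \<times> V b) p * F p) \<partial>P)"
      by (simp add: sqsum sum_distrib_right)
    also have "\<dots> = (\<Sum>a\<in>A. \<integral>p. (\<Sum>b\<in>A. indicator (V a \<times> V b) p * F p) \<partial>P)"
      using int by (intro Bochner_Integration.integral_sum) auto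
    also have "\<dots> = (\<Sum>a\<in>A. \<Sum>b\<in>A. \<integral>p. indicator (V a \<times> V b) p * F p \<partial>P)"
      using int by (intro sum.cong refl Bochner_Integration.integral_sum) auto
    finally show ?thesis .
  qed
  define Jg where "Jg a b = (\<integral>p. indicator (V a \<times> V b) p * S_ent (G p) \<partial>P)" for a b
  have entg: "2 * entropy g = (\<Sum>a\<in>A. \<Sum>b\<in>A. Jg a b)"
  proof -
    have "2 * entropy g = (\<integral>p. indicator ({0..1} \<times> {0..1}) p * S_ent (G p) \<partial>P)"
      unfolding entropy_def set_lebesgue_integral_def P_def G_def by simp
    also have "\<dots> = (\<Sum>a\<in>A. \<Sum>b\<in>A. Jg a b)" unfolding Jg_def
    proof (rule blocks)
      show "(\<lambda>p. S_ent (G p)) \<in> borel_measurable P" using Gm by measurable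
      fix p :: "real \<times> real" assume "p \<in> {0..1} \<times> {0..1}"
      thus "\<bar>S_ent (G p)\<bar> \<le> 1" using gb S_bounds by (auto simp: G_def mem_Times_iff)
    qed
    finally show ?thesis .
  qed
  have enth: "2 * entropy h = (\<Sum>a\<in>A. \<Sum>b\<in>A. measure P (V a \<times> V b) * S_ent (c a b))"
  proof -
    have "2 * entropy h = (\<integral>p. indicator ({0..1} \<times> {0..1}) p * S_ent (h (fst p) (snd p)) \<partial>P)"
      unfolding entropy_def set_lebesgue_integral_def P_def by simp
    also have "\<dots> = (\<Sum>a\<in>A. \<Sum>b\<in>A. \<integral>p. indicator (V a \<times> V b) p * S_ent (h (fst p) (snd p)) \<partial>P)"
    proof (rule blocks)
      show "(\<lambda>p. S_ent (h (fst p) (snd p))) \<in> borel_measurable P" using hm by measurable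
      fix p :: "real \<times> real" assume "p \<in> {0..1} \<times> {0..1}"
      thus "\<bar>S_ent (h (fst p) (snd p))\<bar> \<le> 1" using hsq c01 S_bounds by (auto simp: mem_Times_iff)
    qed
    also have "\<dots> = (\<Sum>a\<in>A. \<Sum>b\<in>A. measure P (V a \<times> V b) * S_ent (c a b))"
    proof (intro sum.cong refl)
      fix a b
      have "(\<integral>p. indicator (V a \<times> V b) p * S_ent (h (fst p) (snd p)) \<partial>P)
          = (\<integral>p. indicator (V a \<times> V b) p * S_ent (c a b) \<partial>P)"
      proof (rule Bochner_Integration.integral_cong[OF refl])
        fix p :: "real \<times> real"
        show "indicator (V a \<times> V b) p * S_ent (h (fst p) (snd p)) = indicator (V a \<times> V b) p * S_ent (c a b)"
        proof (cases "p \<in> V a \<times> V b")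
          case True
          hence "fst p \<in> {0..1}" "snd p \<in> {0..1}" "d (fst p) = a" "d (snd p) = b"
            unfolding V_def by (auto simp: mem_Times_iff)
          thus ?thesis using hsq by simp
        qed simp
      qed
      also have "\<dots> = measure P (V a \<times> V b) * S_ent (c a b)"
        using Bm[of a b] by (simp add: P_def space_pair_measure)
      finally show "(\<integral>p. indicator (V a \<times> V b) p * S_ent (h (fst p) (snd p)) \<partial>P)
          = measure P (V a \<times> V b) * S_ent (c a b)" .
    qed
    finally show ?thesis .
  qed
  have blk1: "Jg a b \<le> measure P (V a \<times> V b) * S_ent (c a b)"
    and blk2: "Jg a b = measure P (V a \<times> V b) * S_ent (c a b) \<Longrightarrow>
               AE p in P. p \<in> V a \<times> V b \<longrightarrow> G p = c a b" for a b
  proof -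
    have rng: "\<And>p. p \<in> V a \<times> V b \<Longrightarrow> 0 \<le> G p \<and> G p \<le> 1"
    proof -
      fix p assume "p \<in> V a \<times> V b"
      hence "fst p \<in> {0..1}" "snd p \<in> {0..1}" using Vsub[of a] Vsub[of b] by (auto simp: mem_Times_iff)
      thus "0 \<le> G p \<and> G p \<le> 1" using gb unfolding G_def by simp
    qed
    have fin: "emeasure P (V a \<times> V b) < \<infinity>" using emP by simp
    have cc: "c a b = (\<integral>p. indicator (V a \<times> V b) p * G p \<partial>P) / measure P (V a \<times> V b)"
      unfolding c_def I_def ..
    note B = block[OF Bm[of a b] fin Gm rng cc]
    show "Jg a b \<le> measure P (V a \<times> V b) * S_ent (c a b)" using B(1) unfolding Jg_def .
    show "Jg a b = measure P (V a \<times> V b) * S_ent (c a b) \<Longrightarrow>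
               AE p in P. p \<in> V a \<times> V b \<longrightarrow> G p = c a b" using B(2) unfolding Jg_def .
  qed
  define K where "K a b = measure P (V a \<times> V b) * S_ent (c a b) - Jg a b" for a b
  have K0: "0 \<le> K a b" for a b using blk1[of a b] unfolding K_def by simp
  have "entropy h \<le> entropy g" by (rule assms(2)[OF graphon_h AEdeg])
  hence "(\<Sum>a\<in>A. \<Sum>b\<in>A. K a b) \<le> 0"
    using entg enth unfolding K_def by (simp add: sum_subtractf)
  moreover have "0 \<le> (\<Sum>a\<in>A. \<Sum>b\<in>A. K a b)" using K0 by (simp add: sum_nonneg)
  ultimately have "(\<Sum>a\<in>A. \<Sum>b\<in>A. K a b) = 0" by simp
  hence "\<forall>a\<in>A. (\<Sum>b\<in>A. K a b) = 0" using finA K0 by (subst (asm) sum_nonneg_eq_0_iff) (auto intro: sum_nonneg)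
  hence Kz: "a \<in> A \<Longrightarrow> b \<in> A \<Longrightarrow> K a b = 0" for a b using finA K0 by (simp add: sum_nonneg_eq_0_iff)
  have AEblk: "a \<in> A \<Longrightarrow> b \<in> A \<Longrightarrow> AE p in P. p \<in> V a \<times> V b \<longrightarrow> G p = c a b" for a b
    using blk2 Kz unfolding K_def by simp
  have main: "\<forall>a\<in>A. \<forall>b\<in>A. \<exists>c. AE p in lborel \<Otimes>\<^sub>M lborel.
         fst p \<in> V a \<and> snd p \<in> V b \<longrightarrow> g (fst p) (snd p) = c"
  proof (intro ballI)
    fix a b assume "a \<in> A" "b \<in> A"
    from AEblk[OF this] show "\<exists>c. AE p in lborel \<Otimes>\<^sub>M lborel.
         fst p \<in> V a \<and> snd p \<in> V b \<longrightarrow> g (fst p) (snd p) = c"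
      unfolding P_def G_def by (intro exI[of _ "c a b"]) (auto simp: mem_Times_iff)
  qed
  have podal: "podal M g"
  proof -
    obtain e where e: "bij_betw e {0..<card A} A" using ex_bij_betw_nat_finite[OF finA] by blast
    have MA: "M = card A" using assms(4) unfolding A_def d_def by simp
    show ?thesis unfolding podal_def
    proof (intro exI[of _ M] exI[of _ "\<lambda>i. V (e i)"] conjI allI impI)
      show "M \<le> M" by simp
      fix i assume "i < M"
      show "V (e i) \<in> sets lebesgue" using Vm[of "e i"] by simp
    next
      have eA: "e ` {..<M} = A" using e unfolding MA bij_betw_def by (simp add: lessThan_atLeast0)
      have "(\<Union>i<M. V (e i)) = (\<Union>a\<in>e ` {..<M}. V a)" by simp
      also have "\<dots> = (\<Union>a\<in>A. V a)" by (simp only: eA)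
      also have "\<dots> = {0..1}" unfolding A_def V_def by auto
      finally show "(\<Union>i<M. V (e i)) = {0..1}" .
    next
      fix i j assume ij: "i < M" "j < M" "i \<noteq> j"
      hence "e i \<noteq> e j" using e unfolding MA bij_betw_def inj_on_def by auto
      thus "V (e i) \<inter> V (e j) = {}" unfolding V_def by auto
    next
      fix i j assume ij: "i < M" "j < M"
      hence "e i \<in> A" "e j \<in> A" using e unfolding MA bij_betw_def by auto
      thus "\<exists>c. AE p in lborel \<Otimes>\<^sub>M lborel. fst p \<in> V (e i) \<and> snd p \<in> V (e j) \<longrightarrow> g (fst p) (snd p) = c"
        using main by blast
    qed
  qed
  have eqA: "degree_fun g ` {0..1} = A" unfolding A_def d_def ..
  have eqV: "{x\<in>{0..1}. degree_fun g x = a} = V a" for a unfolding V_def d_def ..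
  show ?thesis unfolding eqA eqV using podal main by blast
qed

end
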